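(* Let $0\le q\le 1/2$ and consider the type II binary symmetric wiretap channel BSC-WT($q$), whose main channel is noiseless and whose eavesdropper channel is a binary symmetric channel with crossover probability $q$. Let $\{\mathcal{C}(n)\}$ be a good binary linear code sequence of rate $R_c$ with erasure rate threshold $\delta^{\star}$ for binary erasure channels. Let $\mathcal{C}_0(n)=\{0,1\}^n$ and $\mathcal{C}_1(n)=\mathcal{C}^{\perp}(n)$. Suppose the secure nested code sequence $\{\mathcal{C}_0(n),\mathcal{C}_1(n)\}$ is used over BSC-WT($q$). If $q\ge(1-\delta^{\star})/2$, then the rate-equivocation pair $(R,R_e)=(R_c,R_c)$ is achievable.
   Context: A binary linear code sequence $\{\mathcal{C}(n)\}$ consists of $(n,k_n)$ binary linear codes with common rate $R_c=k_n/n$; it is good if it achieves arbitrarily small word error probability over a noisy channel at nonzero rate. Its erasure rate threshold $\delta^\star$ is the worst-case (largest) erasure probability of a binary erasure channel at which the word error probability (under maximum-likelihood decoding) tends to zero as $n\to\infty$. Dual code: $\mathcal{C}^\perp(n)=\{\mathbf{x}\in\{0,1\}^n:\mathbf{x}\cdot\mathbf{y}=0\ \forall\mathbf{y}\in\mathcal{C}(n)\}$. Secure nested code sequence: $\mathcal{C}_1(n)\subseteq\mathcal{C}_0(n)$ linear codes of rates $R_1\le R_0$; cosets of $\mathcal{C}_1(n)$ in $\mathcal{C}_0(n)$ are indexed by messages $w\in\{1,\dots,M\}$, $M=2^{n(R_0-R_1)}$; a uniform message $W=w$ is encoded by choosing a codeword uniformly at random from coset $\mathcal{C}_w(n)$;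 the legitimate receiver recovers $w$ as the coset of the received word. Information rate is $R_0-R_1$. A pair $(R,R_e)$ is achievable if there is a rate-$R$ code sequence with average error probability at the legitimate receiver tending to $0$ and $R_e\le\lim_{n\to\infty}H(W|\mathbf{Z})/n$, where $\mathbf{Z}$ is the eavesdropper's output. *)

theory Defs
  imports "HOL-Analysis.Analysis"
begin

text \<open>Words of length n over {0,1} are boolean lists of length n (True = 1).\<close>

definition vecs :: "nat \<Rightarrow> bool list set" where
  "vecs n = {x. length x = n}"

definition vadd :: "bool list \<Rightarrow> bool list \<Rightarrow> bool list" where
  "vadd x y = map2 (\<noteq>) x y"

definition dotp :: "bool list \<Rightarrow> bool list \<Rightarrow> bool" where
  "dotp x y = odd (card {i. i < length x \<and> x ! i \<and> y ! i})"

definition hdist :: "bool list \<Rightarrow> bool list \<Rightarrow> nat" where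
  "hdist x y = card {i. i < length x \<and> x ! i \<noteq> y ! i}"

definition linear_code :: "nat \<Rightarrow> bool list set \<Rightarrow> bool" where
  "linear_code n C \<longleftrightarrow> C \<subseteq> vecs n \<and> replicate n False \<in> C \<and>
     (\<forall>x\<in>C. \<forall>y\<in>C. vadd x y \<in> C)"

definition dual_code :: "nat \<Rightarrow> bool list set \<Rightarrow> bool list set" where
  "dual_code n C = {x \<in> vecs n. \<forall>y\<in>C. \<not> dotp x y}"

text \<open>Average word error probability of ML decoding (ties broken uniformly at random)
  of the code C of length n over BEC(delta), codewords equiprobable.  For an erasure
  pattern S (set of erased positions) and transmitted word c, the ML decoder chooses
  uniformly among the codewords agreeing with c outside S.\<close>
definition bec_ml_error :: "nat \<Rightarrow> bool list set \<Rightarrow> real \<Rightarrow> real" where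
  "bec_ml_error n C \<delta> =
     (\<Sum>c\<in>C. \<Sum>S\<in>Pow {..<n}.
        (1 / real (card C)) * (\<delta> ^ card S * (1 - \<delta>) ^ (n - card S)) *
        (1 - 1 / real (card {c'\<in>C. \<forall>i<n. i \<notin> S \<longrightarrow> c' ! i = c ! i})))"

definition code_seq :: "(nat \<Rightarrow> nat) \<Rightarrow> (nat \<Rightarrow> bool list set) \<Rightarrow> real \<Rightarrow> bool" where
  "code_seq len C Rc \<longleftrightarrow> strict_mono len \<and> (\<forall>m. 0 < len m) \<and>
     (\<forall>m. linear_code (len m) (C m) \<and>
        (\<exists>k::nat. card (C m) = 2 ^ k \<and> real k = Rc * real (len m)))"

definition erasure_threshold :: "(nat \<Rightarrow> nat) \<Rightarrow> (nat \<Rightarrow> bool list set) \<Rightarrow> real" where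
  "erasure_threshold len C =
     Sup {\<delta> \<in> {0..1}. (\<lambda>m. bec_ml_error (len m) (C m) \<delta>) \<longlonglongrightarrow> 0}"

text \<open>Good: nonzero rate and vanishing word error probability over a noisy channel,
  here a binary erasure channel with erasure probability \<delta> > 0.\<close>
definition good_code_seq :: "(nat \<Rightarrow> nat) \<Rightarrow> (nat \<Rightarrow> bool list set) \<Rightarrow> real \<Rightarrow> bool" where
  "good_code_seq len C Rc \<longleftrightarrow> code_seq len C Rc \<and> 0 < Rc \<and>
     (\<exists>\<delta>. 0 < \<delta> \<and> \<delta> \<le> 1 \<and> (\<lambda>m. bec_ml_error (len m) (C m) \<delta>) \<longlonglongrightarrow> 0)"

text \<open>Messages = cosets of C1 in C0.\<close>
definition cosets :: "bool list set \<Rightarrow> bool list set \<Rightarrow> bool list set set" where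
  "cosets C0 C1 = (\<lambda>x. {vadd x y | y. y \<in> C1}) ` C0"

definition info_rate :: "nat \<Rightarrow> bool list set \<Rightarrow> bool list set \<Rightarrow> real" where
  "info_rate n C0 C1 = log 2 (real (card C0)) / real n - log 2 (real (card C1)) / real n"

definition bsc :: "real \<Rightarrow> nat \<Rightarrow> bool list \<Rightarrow> bool list \<Rightarrow> real" where
  "bsc q n x z = q ^ hdist x z * (1 - q) ^ (n - hdist x z)"

text \<open>Joint probability P(W = w, Z = z): W uniform over the cosets, X uniform in the
  coset w, Z the output of BSC(q) with input X.\<close>
definition p_WZ :: "real \<Rightarrow> nat \<Rightarrow> bool list set \<Rightarrow> bool list set \<Rightarrow>
                     bool list set \<Rightarrow> bool list \<Rightarrow> real" where
  "p_WZ q n C0 C1 w z =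
     (\<Sum>x\<in>w. (1 / real (card (cosets C0 C1))) * (1 / real (card w)) * bsc q n x z)"

definition p_Z :: "real \<Rightarrow> nat \<Rightarrow> bool list set \<Rightarrow> bool list set \<Rightarrow> bool list \<Rightarrow> real" where
  "p_Z q n C0 C1 z = (\<Sum>w\<in>cosets C0 C1. p_WZ q n C0 C1 w z)"

text \<open>Equivocation H(W|Z) in bits (note log 2 0 = 0 in Isabelle, giving 0 log 0 = 0).\<close>
definition equivocation :: "real \<Rightarrow> nat \<Rightarrow> bool list set \<Rightarrow> bool list set \<Rightarrow> real" where
  "equivocation q n C0 C1 =
     - (\<Sum>w\<in>cosets C0 C1. \<Sum>z\<in>vecs n.
          p_WZ q n C0 C1 w z * log 2 (p_WZ q n C0 C1 w z / p_Z q n C0 C1 z))"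

text \<open>Average error probability at the legitimate receiver: the main channel is
  noiseless, so it receives X and decodes the coset of the received word.\<close>
definition legit_error :: "nat \<Rightarrow> bool list set \<Rightarrow> bool list set \<Rightarrow> real" where
  "legit_error n C0 C1 =
     (\<Sum>w\<in>cosets C0 C1. \<Sum>x\<in>w.
        (1 / real (card (cosets C0 C1))) * (1 / real (card w)) *
        (if {vadd x y | y. y \<in> C1} \<noteq> w then 1 else 0))"

definition nested_achieves ::
  "real \<Rightarrow> (nat \<Rightarrow> nat) \<Rightarrow> (nat \<Rightarrow> bool list set) \<Rightarrow> (nat \<Rightarrow> bool list set) \<Rightarrow>
   real \<Rightarrow> real \<Rightarrow> bool" where
  "nested_achieves q len C0 C1 R R\<^sub>e \<longleftrightarrow>
     (\<forall>m. info_rate (len m) (C0 m) (C1 m) = R) \<and>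
     (\<lambda>m. legit_error (len m) (C0 m) (C1 m)) \<longlonglongrightarrow> 0 \<and>
     ereal R\<^sub>e \<le> liminf (\<lambda>m. ereal (equivocation q (len m) (C0 m) (C1 m) / real (len m)))"

end

theory Submission
  imports Defs
begin

definition supp :: "bool list \<Rightarrow> nat set" where
  "supp x = {i. i < length x \<and> x ! i}"
definition Vs :: "nat \<Rightarrow> nat set \<Rightarrow> bool list set" where
  "Vs n S = {x \<in> vecs n. supp x \<subseteq> S}"
definition sg :: "bool \<Rightarrow> real" where "sg b = (if b then -1 else 1)"

lemma length_vadd[simp]: "length (vadd x y) = min (length x) (length y)"
  by (simp add: vadd_def)
lemma nth_vadd[simp]: "i < length x \<Longrightarrow> i < length y \<Longrightarrow> vadd x y ! i = (x ! i \<noteq> y ! i)"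
  by (simp add: vadd_def)
lemma vadd_comm: "vadd x y = vadd y x"
  by (rule nth_equalityI) auto
lemma vadd_assoc: "length x = length y \<Longrightarrow> length y = length z \<Longrightarrow> vadd (vadd x y) z = vadd x (vadd y z)"
  by (rule nth_equalityI) auto
lemma vadd_self: "vadd x x = replicate (length x) False"
  by (rule nth_equalityI) auto
lemma vadd_zero: "length y = length x \<Longrightarrow> vadd x (replicate (length y) False) = x"
  by (rule nth_equalityI) auto
lemma vadd_cancel: "length x = length y \<Longrightarrow> vadd (vadd x y) y = x"
  by (rule nth_equalityI) auto
lemma vadd_cancel2: "length x = length y \<Longrightarrow> vadd y (vadd y x) = x"
  by (rule nth_equalityI) auto
lemma vecs_vadd: "x \<in> vecs n \<Longrightarrow> y \<in> vecs n \<Longrightarrow> vadd x y \<in> vecs n"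
  by (simp add: vecs_def)
lemma finite_vecs[simp]: "finite (vecs n)"
proof -
  have "vecs n = {xs. set xs \<subseteq> UNIV \<and> length xs = n}" by (auto simp: vecs_def)
  then show ?thesis using finite_lists_length_eq[of "UNIV::bool set" n] by simp
qed
lemma card_vecs: "card (vecs n) = 2 ^ n"
proof -
  have "vecs n = {xs. set xs \<subseteq> UNIV \<and> length xs = n}" by (auto simp: vecs_def)
  then show ?thesis using card_lists_length_eq[of "UNIV::bool set" n] by simp
qed

lemma card_split: "finite A \<Longrightarrow> card A = card (A - B) + card (A \<inter> B)"
proof -
  assume f: "finite A"
  have "A = (A - B) \<union> (A \<inter> B)" by auto
  then have "card A = card ((A - B) \<union> (A \<inter> B))" by simp
  also have "\<dots> = card (A - B) + card (A \<inter> B)" by (rule card_Un_disjoint) (use f in auto)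
  finally show ?thesis .
qed

lemma odd_card_symdiff:
  assumes "finite A" "finite B"
  shows "odd (card ((A - B) \<union> (B - A))) = (odd (card A) \<noteq> odd (card B))"
proof -
  have "card ((A - B) \<union> (B - A)) = card (A - B) + card (B - A)"
    by (rule card_Un_disjoint) (use assms in auto)
  moreover have "card A = card (A - B) + card (A \<inter> B)" using assms card_split by blast
  moreover have "card B = card (B - A) + card (A \<inter> B)" using assms card_split[of B A] by (simp add: Int_commute)
  ultimately show ?thesis by presburger
qed

lemma dotp_vadd2:
  assumes "length y = length x" "length z = length x"
  shows "dotp x (vadd y z) = (dotp x y \<noteq> dotp x z)"
proof -
  let ?A = "{i. i < length x \<and> x ! i \<and> y ! i}" and ?B = "{i. i < length x \<and> x ! i \<and> z ! i}"
  have "{i. i < length x \<and> x ! i \<and> vadd y z ! i} = (?A - ?B) \<union> (?B - ?A)"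
    using assms by auto
  then show ?thesis unfolding dotp_def using odd_card_symdiff[of ?A ?B] by simp
qed

lemma dotp_vadd1:
  assumes "length y = length x" "length z = length x"
  shows "dotp (vadd x y) z = (dotp x z \<noteq> dotp y z)"
proof -
  let ?A = "{i. i < length x \<and> x ! i \<and> z ! i}" and ?B = "{i. i < length y \<and> y ! i \<and> z ! i}"
  have "{i. i < length (vadd x y) \<and> vadd x y ! i \<and> z ! i} = (?A - ?B) \<union> (?B - ?A)"
    using assms by auto
  then show ?thesis unfolding dotp_def using odd_card_symdiff[of ?A ?B] by simp
qed

lemma sum_sg_zero:
  assumes "finite X" "u \<in> X" "\<And>x. x \<in> X \<Longrightarrow> vadd x u \<in> X"
    "\<And>x. x \<in> X \<Longrightarrow> f (vadd x u) = (\<not> f x)" "\<And>x. x \<in> X \<Longrightarrow> length x = length u"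
  shows "(\<Sum>x\<in>X. sg (f x)) = 0"
proof -
  have inv: "vadd (vadd x u) u = x" if "x \<in> X" for x
    using vadd_cancel assms(5)[OF that] by blast
  have "(\<Sum>x\<in>X. sg (f x)) = (\<Sum>x\<in>X. sg (f (vadd x u)))"
    apply (rule sum.reindex_bij_witness[of _ "\<lambda>x. vadd x u" "\<lambda>x. vadd x u"])
    using inv assms(3) by auto
  also have "\<dots> = (\<Sum>x\<in>X. - sg (f x))" 
    by (rule sum.cong) (use assms(4) in \<open>auto simp: sg_def\<close>)
  also have "\<dots> = - (\<Sum>x\<in>X. sg (f x))" by (simp add: sum_negf)
  finally show ?thesis by simp
qed

lemma linear_codeD:
  assumes "linear_code n C"
  shows "C \<subseteq> vecs n" "replicate n False \<in> C" "\<And>x y. x \<in> C \<Longrightarrow> y \<in> C \<Longrightarrow> vadd x y \<in> C"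
    "finite C" "\<And>x. x \<in> C \<Longrightarrow> length x = n"
  using assms finite_subset[OF _ finite_vecs] unfolding linear_code_def by (auto simp: vecs_def)

lemma char_C:
  assumes "linear_code n C" "x \<in> vecs n"
  shows "(\<Sum>c\<in>C. sg (dotp x c)) = (if x \<in> dual_code n C then real (card C) else 0)"
proof (cases "x \<in> dual_code n C")
  case True
  then show ?thesis by (simp add: dual_code_def sg_def)
next
  case False
  then obtain c0 where c0: "c0 \<in> C" "dotp x c0" using assms(2) by (auto simp: dual_code_def)
  have lx: "length x = n" using assms(2) by (simp add: vecs_def)
  have "(\<Sum>c\<in>C. sg (dotp x c)) = 0"
    apply (rule sum_sg_zero[where u=c0])
    using c0 linear_codeD[OF assms(1)] lx by (auto simp: dotp_vadd2)
  then show ?thesis using False by simp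
qed

lemma Vs_sub: "Vs n S \<subseteq> vecs n" by (auto simp: Vs_def)
lemma finite_Vs[simp]: "finite (Vs n S)" by (rule finite_subset[OF Vs_sub finite_vecs])

lemma supp_vadd: "length x = length y \<Longrightarrow> supp (vadd x y) \<subseteq> supp x \<union> supp y"
  by (auto simp: supp_def)

lemma char_V:
  assumes "c \<in> vecs n"
  shows "(\<Sum>x\<in>Vs n S. sg (dotp x c)) = (if supp c \<inter> S = {} then real (card (Vs n S)) else 0)"
proof (cases "supp c \<inter> S = {}")
  case True
  have "\<not> dotp x c" if "x \<in> Vs n S" for x
  proof -
    have "{i. i < length x \<and> x ! i \<and> c ! i} = {}"
    proof (rule ccontr)
      assume "{i. i < length x \<and> x ! i \<and> c ! i} \<noteq> {}"
      then obtain i where "i < length x" "x ! i" "c ! i" by blast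
      moreover have "length x = n" "length c = n" "supp x \<subseteq> S" using that assms by (auto simp: Vs_def vecs_def)
      ultimately have "i \<in> supp c \<inter> S" by (auto simp: supp_def)
      then show False using True by blast
    qed
    then show ?thesis unfolding dotp_def by (simp only: card.empty) simp
  qed
  then show ?thesis using True by (simp add: sg_def)
next
  case False
  then obtain i where i: "i \<in> S" "i < length c" "c ! i" by (auto simp: supp_def)
  have lc: "length c = n" using assms by (simp add: vecs_def)
  define e where "e = map (\<lambda>j. j = i) [0..<n]"
  have le: "length e = n" by (simp add: e_def)
  have se: "supp e = {i}" using i lc by (auto simp: e_def supp_def)
  have e: "e \<in> Vs n S" using i se le by (auto simp: Vs_def vecs_def)
  have de: "dotp e c" 
  proof -
    have "{j. j < length e \<and> e ! j \<and> c ! j} = {i}" using i lc by (auto simp: e_def)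
    then show ?thesis by (simp add: dotp_def)
  qed
  have cl: "vadd x e \<in> Vs n S" if "x \<in> Vs n S" for x
  proof -
    have "length x = n" "supp x \<subseteq> S" using that by (auto simp: Vs_def vecs_def)
    then show ?thesis using supp_vadd[of x e] le se i by (auto simp: Vs_def vecs_def)
  qed
  have "(\<Sum>x\<in>Vs n S. sg (dotp x c)) = 0"
  proof (rule sum_sg_zero[where u=e])
    fix x assume x: "x \<in> Vs n S"
    then have lx: "length x = n" by (simp add: Vs_def vecs_def)
    show "vadd x e \<in> Vs n S" using cl x by blast
    show "length x = length e" using lx le by simp
    show "dotp (vadd x e) c = (\<not> dotp x c)" using dotp_vadd1[of e x c] lx le lc de by simp
  qed (use e in auto)
  then show ?thesis using False by simp
qed

lemma supp_sub: "supp x \<subseteq> {..<length x}" by (auto simp: supp_def)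

lemma card_Vs:
  assumes "S \<subseteq> {..<n}"
  shows "card (Vs n S) = 2 ^ card S"
proof -
  have fS: "finite S" using assms finite_subset by blast
  have "bij_betw supp (Vs n S) (Pow S)"
  proof (rule bij_betw_imageI)
    show "inj_on supp (Vs n S)"
    proof (rule inj_onI)
      fix x y assume x: "x \<in> Vs n S" and y: "y \<in> Vs n S" and e: "supp x = supp y"
      have l: "length x = n" "length y = n" using x y by (auto simp: Vs_def vecs_def)
      show "x = y"
      proof (rule nth_equalityI)
        show "length x = length y" using l by simp
        fix i assume "i < length x"
        then have "x ! i = (i \<in> supp x)" "y ! i = (i \<in> supp y)" using l by (auto simp: supp_def)
        then show "x ! i = y ! i" using e by simp
      qed
    qed
    show "supp ` Vs n S = Pow S"
    proof
      show "supp ` Vs n S \<subseteq> Pow S" by (auto simp: Vs_def)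
      show "Pow S \<subseteq> supp ` Vs n S"
      proof
        fix T assume "T \<in> Pow S"
        then have T: "T \<subseteq> {..<n}" "T \<subseteq> S" using assms by auto
        define x where "x = map (\<lambda>j. j \<in> T) [0..<n]"
        have "supp x = T" using T by (auto simp: x_def supp_def)
        moreover have "x \<in> Vs n S" using T \<open>supp x = T\<close> by (auto simp: Vs_def vecs_def x_def)
        ultimately show "T \<in> supp ` Vs n S" by blast
      qed
    qed
  qed
  then have "card (Vs n S) = card (Pow S)" by (rule bij_betw_same_card)
  then show ?thesis using fS by (simp add: card_Pow)
qed

lemma sum_if_const: "finite A \<Longrightarrow> (\<Sum>x\<in>A. if P x then (k::real) else 0) = k * real (card {x\<in>A. P x})"
  by (simp add: sum.inter_filter[symmetric])

lemma duality:
  assumes C: "linear_code n C" and S: "S \<subseteq> {..<n}"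
  shows "real (card (Vs n S \<inter> dual_code n C)) * real (card C) =
         2 ^ card S * real (card (C \<inter> Vs n ({..<n} - S)))"
proof -
  note L = linear_codeD[OF C]
  have "(\<Sum>x\<in>Vs n S. \<Sum>c\<in>C. sg (dotp x c)) = (\<Sum>x\<in>Vs n S. if x \<in> dual_code n C then real (card C) else 0)"
    by (rule sum.cong) (use char_C[OF C] Vs_sub in blast)+
  also have "\<dots> = real (card C) * real (card {x \<in> Vs n S. x \<in> dual_code n C})"
    by (rule sum_if_const) simp
  also have "{x \<in> Vs n S. x \<in> dual_code n C} = Vs n S \<inter> dual_code n C" by blast
  finally have 1: "(\<Sum>x\<in>Vs n S. \<Sum>c\<in>C. sg (dotp x c)) = real (card C) * real (card (Vs n S \<inter> dual_code n C))" .
  have "(\<Sum>x\<in>Vs n S. \<Sum>c\<in>C. sg (dotp x c)) = (\<Sum>c\<in>C. \<Sum>x\<in>Vs n S. sg (dotp x c))"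
    by (rule sum.swap)
  also have "\<dots> = (\<Sum>c\<in>C. if supp c \<inter> S = {} then real (card (Vs n S)) else 0)"
    by (rule sum.cong) (use char_V L(1) in blast)+
  also have "\<dots> = real (card (Vs n S)) * real (card {c \<in> C. supp c \<inter> S = {}})"
    by (rule sum_if_const) (use L in auto)
  also have "{c \<in> C. supp c \<inter> S = {}} = C \<inter> Vs n ({..<n} - S)"
  proof -
    have "supp c \<subseteq> {..<n}" if "c \<in> C" for c using supp_sub[of c] L(5)[OF that] by simp
    then show ?thesis using L(1) by (auto simp: Vs_def)
  qed
  finally show ?thesis using 1 card_Vs[OF S] by (simp add: mult.commute)
qed


definition cs :: "bool list set \<Rightarrow> bool list \<Rightarrow> bool list set" where
  "cs D x = {vadd x y | y. y \<in> D}"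

lemma dual_linear:
  assumes "C \<subseteq> vecs n"
  shows "linear_code n (dual_code n C)"
proof -
  have "\<not> dotp (replicate n False) y" for y 
  proof -
    have "{i. i < length (replicate n False) \<and> replicate n False ! i \<and> y ! i} = {}" by auto
    then show ?thesis unfolding dotp_def by (simp only: card.empty) simp
  qed
  moreover have "dotp (vadd x x') y = (dotp x y \<noteq> dotp x' y)" if "x \<in> vecs n" "x' \<in> vecs n" "y \<in> C" for x x' y
    using dotp_vadd1[of x' x y] that assms by (auto simp: vecs_def)
  ultimately show ?thesis unfolding linear_code_def dual_code_def
    by (auto simp: vecs_def intro: vecs_vadd)
qed

context
  fixes n :: nat and D :: "bool list set"
  assumes D: "linear_code n D"
begin

lemma D_props: "D \<subseteq> vecs n" "replicate n False \<in> D" "\<And>x y. x \<in> D \<Longrightarrow> y \<in> D \<Longrightarrow> vadd x y \<in> D"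
    "finite D" "\<And>x. x \<in> D \<Longrightarrow> length x = n"
  using linear_codeD[OF D] by auto

lemma cs_sub: "x \<in> vecs n \<Longrightarrow> cs D x \<subseteq> vecs n"
  using D_props by (auto simp: cs_def intro: vecs_vadd)

lemma cs_self: "x \<in> vecs n \<Longrightarrow> x \<in> cs D x"
  unfolding cs_def using D_props(2) vadd_zero[of x x] by (force simp: vecs_def)

lemma cs_mem: "x \<in> vecs n \<Longrightarrow> y \<in> cs D x \<longleftrightarrow> y \<in> vecs n \<and> vadd x y \<in> D"
proof
  assume x: "x \<in> vecs n"
  show "y \<in> cs D x \<Longrightarrow> y \<in> vecs n \<and> vadd x y \<in> D"
  proof -
    assume "y \<in> cs D x"
    then obtain d where d: "d \<in> D" "y = vadd x d" by (auto simp: cs_def)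
    have "length d = n" "length x = n" using d D_props x by (auto simp: vecs_def)
    then have "vadd x y = d" using d(2) vadd_cancel2 by simp
    then show ?thesis using d x D_props by (auto intro: vecs_vadd)
  qed
  show "y \<in> vecs n \<and> vadd x y \<in> D \<Longrightarrow> y \<in> cs D x"
  proof -
    assume a: "y \<in> vecs n \<and> vadd x y \<in> D"
    have "y = vadd x (vadd x y)" using a x vadd_cancel2[of y x] by (simp add: vecs_def)
    then show ?thesis using a by (auto simp: cs_def)
  qed
qed

lemma cs_eq: assumes "x \<in> vecs n" "y \<in> cs D x" shows "cs D y = cs D x"
proof -
  have y: "y \<in> vecs n" "vadd x y \<in> D" using cs_mem assms by auto
  have lx: "length x = n" "length y = n" using assms y by (auto simp: vecs_def)
  show ?thesis
  proof (rule set_eqI)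
    fix u
    show "u \<in> cs D y \<longleftrightarrow> u \<in> cs D x"
    proof (cases "u \<in> vecs n")
      case True
      then have lu: "length u = n" by (simp add: vecs_def)
      have e1: "vadd x u = vadd (vadd x y) (vadd y u)"
        using lx lu by (intro nth_equalityI) auto
      have e2: "vadd y u = vadd (vadd x y) (vadd x u)"
        using lx lu by (intro nth_equalityI) auto
      show ?thesis using cs_mem[OF y(1)] cs_mem[OF assms(1)] True e1 e2 D_props(3) y(2) by metis
    next
      case False
      then show ?thesis using cs_mem[OF y(1)] cs_mem[OF assms(1)] by blast
    qed
  qed
qed

lemma card_cs: "x \<in> vecs n \<Longrightarrow> card (cs D x) = card D"
proof -
  assume x: "x \<in> vecs n"
  have "cs D x = vadd x ` D" by (auto simp: cs_def)
  moreover have "inj_on (vadd x) D"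
  proof (rule inj_onI)
    fix a b assume "a \<in> D" "b \<in> D" "vadd x a = vadd x b"
    then show "a = b" using vadd_cancel2[of a x] vadd_cancel2[of b x] x D_props(5) by (metis vecs_def mem_Collect_eq)
  qed
  ultimately show ?thesis by (simp add: card_image)
qed

definition W where "W = cosets (vecs n) D"

lemma W_eq: "W = cosets (vecs n) D" by (simp add: W_def)

lemma W_alt: "W = cs D ` vecs n" by (auto simp: W_def cosets_def cs_def)

lemma finite_W: "finite W" by (simp add: W_alt)

lemma W_sub: "w \<in> W \<Longrightarrow> w \<subseteq> vecs n" using cs_sub by (auto simp: W_alt)

lemma W_finite_mem: "w \<in> W \<Longrightarrow> finite w" using W_sub finite_subset finite_vecs by blast

lemma W_card: "w \<in> W \<Longrightarrow> card w = card D" using card_cs by (auto simp: W_alt)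

lemma W_cs: "w \<in> W \<Longrightarrow> x \<in> w \<Longrightarrow> cs D x = w"
  using cs_eq by (auto simp: W_alt)

lemma W_disj: "w \<in> W \<Longrightarrow> w' \<in> W \<Longrightarrow> w \<noteq> w' \<Longrightarrow> w \<inter> w' = {}"
  using W_cs by blast

lemma W_Union: "\<Union>W = vecs n"
  using cs_self W_sub by (auto simp: W_alt)

lemma sum_W: "(\<Sum>w\<in>W. \<Sum>x\<in>w. f x) = (\<Sum>x\<in>vecs n. f x)"
proof -
  have "(\<Sum>x\<in>\<Union>W. f x) = (\<Sum>w\<in>W. \<Sum>x\<in>w. f x)"
    using sum.Union_disjoint[of W f] W_finite_mem W_disj by (simp add: comp_def)
  then show ?thesis using W_Union by simp
qed

lemma card_W: "real (card W) * real (card D) = 2 ^ n"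
proof -
  have "(\<Sum>w\<in>W. \<Sum>x\<in>w. (1::real)) = real (card W) * real (card D)"
    using W_card by simp
  then show ?thesis using sum_W[of "\<lambda>_. 1::real"] card_vecs by simp
qed

lemma legit0: "legit_error n (vecs n) D = 0"
proof -
  have "(if {vadd x y | y. y \<in> D} \<noteq> w then 1 else 0) = (0::real)" if "w \<in> cosets (vecs n) D" "x \<in> w" for w x
    using W_cs[of w x] that by (simp add: W_def cs_def)
  then show ?thesis unfolding legit_error_def by simp
qed

end


definition Ex :: "real \<Rightarrow> nat set \<Rightarrow> (nat set \<Rightarrow> real) \<Rightarrow> real" where
  "Ex t A f = (\<Sum>T\<in>Pow A. t ^ card T * (1 - t) ^ card (A - T) * f T)"

lemma binom_pow:
  fixes a b :: real
  assumes "finite B"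
  shows "(\<Sum>X\<in>Pow B. a ^ card X * b ^ card (B - X)) = (a + b) ^ card B"
  using prod_add[OF assms, of "\<lambda>_. a" "\<lambda>_. b"] by simp

lemma Ex_const: "finite A \<Longrightarrow> Ex t A (\<lambda>_. c) = c"
proof -
  assume "finite A"
  then have "(\<Sum>T\<in>Pow A. t ^ card T * (1 - t) ^ card (A - T)) = 1"
    using binom_pow[of A t "1-t"] by simp
  then show ?thesis unfolding Ex_def by (simp add: sum_distrib_right[symmetric])
qed

lemma Ex_mono:
  assumes "0 \<le> t" "t \<le> 1" "\<And>T. T \<subseteq> A \<Longrightarrow> f T \<le> g T"
  shows "Ex t A f \<le> Ex t A g"
  unfolding Ex_def using assms by (intro sum_mono mult_left_mono) auto

lemma Ex_insert:
  assumes "finite A" "a \<notin> A"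
  shows "Ex t (insert a A) f = t * Ex t A (\<lambda>T. f (insert a T)) + (1 - t) * Ex t A f"
proof -
  let ?g = "\<lambda>T. t ^ card T * (1 - t) ^ card (insert a A - T) * f T"
  have fP: "finite (Pow A)" using assms by simp
  have disj: "Pow A \<inter> insert a ` Pow A = {}" using assms by auto
  have inj: "inj_on (insert a) (Pow A)"
    unfolding inj_on_def using assms by (metis Diff_insert_absorb PowD in_mono)
  have "Ex t (insert a A) f = sum ?g (Pow A \<union> insert a ` Pow A)"
    unfolding Ex_def Pow_insert by simp
  also have "\<dots> = sum ?g (Pow A) + sum ?g (insert a ` Pow A)"
    by (rule sum.union_disjoint) (use fP disj in auto)
  also have "sum ?g (insert a ` Pow A) = sum (?g \<circ> insert a) (Pow A)"
    by (rule sum.reindex[OF inj])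
  also have "\<dots> = t * Ex t A (\<lambda>T. f (insert a T))"
    unfolding Ex_def sum_distrib_left
  proof (rule sum.cong)
    fix T assume T: "T \<in> Pow A"
    then have "a \<notin> T" using assms by auto
    moreover have "finite T" using T assms(1) finite_subset by blast
    ultimately have "card (insert a T) = Suc (card T)" by simp
    moreover have "insert a A - insert a T = A - T" using T assms by auto
    ultimately show "(?g \<circ> insert a) T = t * (t ^ card T * (1 - t) ^ card (A - T) * f (insert a T))"
      by simp
  qed simp
  also have "sum ?g (Pow A) = (1 - t) * Ex t A f"
    unfolding Ex_def sum_distrib_left
  proof (rule sum.cong)
    fix T assume T: "T \<in> Pow A"
    then have "insert a A - T = insert a (A - T)" using assms by auto
    moreover have "a \<notin> A - T" using assms by auto
    ultimately have "card (insert a A - T) = Suc (card (A - T))" using assms by simp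
    then show "?g T = (1 - t) * (t ^ card T * (1 - t) ^ card (A - T) * f T)"
      by simp
  qed simp
  finally show ?thesis by simp
qed

lemma Ex_lip:
  assumes "finite A" "0 \<le> t" "t \<le> 1" "0 \<le> d" "d \<le> 1"
    and "\<And>T a. f T \<le> f (insert a T)" "\<And>T a. f (insert a T) \<le> f T + 1"
  shows "Ex t A f \<le> Ex d A f + real (card A) * max 0 (t - d)"
  using assms(1,6,7)
proof (induction A arbitrary: f rule: finite_induct)
  case empty
  then show ?case by (simp add: Ex_def)
next
  case (insert a A)
  let ?fa = "\<lambda>T. f (insert a T)"
  have h1: "?fa T \<le> ?fa (insert b T)" "?fa (insert b T) \<le> ?fa T + 1" for T b
    using insert.prems(1)[of "insert a T" b] insert.prems(2)[of b "insert a T"] by (simp_all add: insert_commute)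
  have IH1: "Ex t A ?fa \<le> Ex d A ?fa + real (card A) * max 0 (t - d)"
    by (rule insert.IH) (use h1 in auto)
  have IH2: "Ex t A f \<le> Ex d A f + real (card A) * max 0 (t - d)"
    by (rule insert.IH) (use insert.prems in auto)
  have m1: "Ex d A f \<le> Ex d A ?fa" by (rule Ex_mono) (use assms insert.prems in auto)
  have m2: "Ex d A ?fa \<le> Ex d A f + 1"
  proof -
    have "Ex d A ?fa \<le> Ex d A (\<lambda>T. f T + 1)" by (rule Ex_mono) (use assms insert.prems in auto)
    also have "Ex d A (\<lambda>T. f T + 1) = Ex d A f + Ex d A (\<lambda>_. 1)"
      unfolding Ex_def by (simp add: distrib_left sum.distrib)
    finally show ?thesis using Ex_const[OF insert.hyps(1)] by simp
  qed
  have E1: "Ex t (insert a A) f = t * Ex t A ?fa + (1 - t) * Ex t A f" by (rule Ex_insert) fact+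
  have E2: "Ex d (insert a A) f = d * Ex d A ?fa + (1 - d) * Ex d A f" by (rule Ex_insert) fact+
  have c: "real (card (insert a A)) = real (card A) + 1" using insert.hyps by simp
  show ?case
  proof (cases "d \<le> t")
    case True
    then have mx: "max 0 (t - d) = t - d" by simp
    have "t * Ex t A ?fa + (1 - t) * Ex t A f \<le> t * (Ex d A ?fa + real (card A) * (t - d))
        + (1 - t) * (Ex d A f + real (card A) * (t - d))"
      using IH1 IH2 mx assms by (intro add_mono mult_left_mono) auto
    also have "\<dots> = d * Ex d A ?fa + (1 - d) * Ex d A f + (t - d) * (Ex d A ?fa - Ex d A f)
        + real (card A) * (t - d)" by (simp add: algebra_simps)
    also have "\<dots> \<le> d * Ex d A ?fa + (1 - d) * Ex d A f + (t - d) * 1 + real (card A) * (t - d)"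
      using m2 True assms(4,5) by (intro add_mono mult_left_mono) auto
    finally show ?thesis using E1 E2 c mx by (simp add: algebra_simps)
  next
    case False
    then have mx: "max 0 (t - d) = 0" by simp
    have "t * Ex t A ?fa + (1 - t) * Ex t A f \<le> t * Ex d A ?fa + (1 - t) * Ex d A f"
      using IH1 IH2 mx assms by (intro add_mono mult_left_mono) auto
    also have "\<dots> = d * Ex d A ?fa + (1 - d) * Ex d A f - (d - t) * (Ex d A ?fa - Ex d A f)"
      by (simp add: algebra_simps)
    also have "\<dots> \<le> d * Ex d A ?fa + (1 - d) * Ex d A f"
      using m1 False by simp
    finally show ?thesis using E1 E2 mx by simp
  qed
qed

lemma sup_binom:
  fixes a b :: real
  assumes "finite A" "X \<subseteq> A"
  shows "(\<Sum>S\<in>{S\<in>Pow A. X \<subseteq> S}. a ^ card S * b ^ card (A - S)) = a ^ card X * (a + b) ^ card (A - X)"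
proof -
  have fX: "finite X" using assms finite_subset by blast
  have inj: "inj_on (\<lambda>S'. X \<union> S') (Pow (A - X))"
    by (rule inj_onI) blast
  have img: "(\<lambda>S'. X \<union> S') ` Pow (A - X) = {S\<in>Pow A. X \<subseteq> S}"
  proof
    show "(\<lambda>S'. X \<union> S') ` Pow (A - X) \<subseteq> {S\<in>Pow A. X \<subseteq> S}" using assms by auto
    show "{S\<in>Pow A. X \<subseteq> S} \<subseteq> (\<lambda>S'. X \<union> S') ` Pow (A - X)"
    proof
      fix S assume "S \<in> {S\<in>Pow A. X \<subseteq> S}"
      then have "S = X \<union> (S - X)" "S - X \<in> Pow (A - X)" by auto
      then show "S \<in> (\<lambda>S'. X \<union> S') ` Pow (A - X)" by blast
    qed
  qed
  have "(\<Sum>S\<in>{S\<in>Pow A. X \<subseteq> S}. a ^ card S * b ^ card (A - S))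
      = (\<Sum>S'\<in>Pow (A - X). a ^ card (X \<union> S') * b ^ card (A - (X \<union> S')))"
    using sum.reindex[OF inj, of "\<lambda>S. a ^ card S * b ^ card (A - S)"] img by simp
  also have "\<dots> = (\<Sum>S'\<in>Pow (A - X). a ^ card X * (a ^ card S' * b ^ card ((A - X) - S')))"
  proof (rule sum.cong)
    fix S' assume S': "S' \<in> Pow (A - X)"
    have fS: "finite S'" using S' assms finite_subset by blast
    have "card (X \<union> S') = card X + card S'" using S' fX fS by (intro card_Un_disjoint) auto
    moreover have "A - (X \<union> S') = (A - X) - S'" by auto
    ultimately show "a ^ card (X \<union> S') * b ^ card (A - (X \<union> S')) = a ^ card X * (a ^ card S' * b ^ card ((A - X) - S'))"
      by (simp add: power_add)
  qed simp
  also have "\<dots> = a ^ card X * (a + b) ^ card (A - X)"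
    using binom_pow[of "A - X" a b] assms by (simp add: sum_distrib_left[symmetric])
  finally show ?thesis .
qed


lemma hdist_supp: "length x = length z \<Longrightarrow> hdist x z = card (supp (vadd x z))"
  unfolding hdist_def supp_def by (rule arg_cong[where f=card]) auto

lemma supp_sub_n: "x \<in> vecs n \<Longrightarrow> supp x \<subseteq> {..<n}"
  by (auto simp: supp_def vecs_def)

lemma bsc_decomp:
  assumes "x \<in> vecs n" "z \<in> vecs n"
  shows "bsc q n x z = (\<Sum>S\<in>Pow {..<n}. (2*q) ^ card S * (1 - 2*q) ^ card ({..<n} - S) *
            (if supp (vadd x z) \<subseteq> S then 1 / 2 ^ card S else 0))"
proof -
  let ?X = "supp (vadd x z)" and ?A = "{..<n::nat}"
  have X: "?X \<subseteq> ?A" using assms vecs_vadd supp_sub_n by blast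
  have fX: "finite ?X" using X finite_subset by blast
  have "(\<Sum>S\<in>Pow ?A. (2*q) ^ card S * (1 - 2*q) ^ card (?A - S) * (if ?X \<subseteq> S then 1 / 2 ^ card S else 0))
      = (\<Sum>S\<in>Pow ?A. if ?X \<subseteq> S then q ^ card S * (1 - 2*q) ^ card (?A - S) else 0)"
    by (rule sum.cong) (auto simp: power_mult_distrib)
  also have "\<dots> = (\<Sum>S\<in>{S\<in>Pow ?A. ?X \<subseteq> S}. q ^ card S * (1 - 2*q) ^ card (?A - S))"
    by (rule sum.inter_filter[symmetric]) simp
  also have "\<dots> = q ^ card ?X * (q + (1 - 2*q)) ^ card (?A - ?X)"
    by (rule sup_binom) (use X in auto)
  also have "card (?A - ?X) = n - card ?X" using X fX by (simp add: card_Diff_subset)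
  finally show ?thesis using hdist_supp[of x z] assms by (simp add: bsc_def vecs_def)
qed

lemma Gibbs:
  fixes h G :: "'a \<Rightarrow> real"
  assumes Yf: "finite Y" and hv: "\<And>w. w \<in> Y \<Longrightarrow> h w = 0 \<or> h w = c"
    and hs: "(\<Sum>w\<in>Y. h w) = 1" and Gs: "(\<Sum>w\<in>Y. G w) \<le> 1" and G0: "\<And>w. w \<in> Y \<Longrightarrow> 0 \<le> G w"
    and pos: "\<And>w. w \<in> Y \<Longrightarrow> h w \<noteq> 0 \<Longrightarrow> 0 < G w"
  shows "- log 2 c \<le> (\<Sum>w\<in>Y. h w * (- log 2 (G w)))"
proof -
  define U where "U = {w\<in>Y. h w \<noteq> 0}"
  have fU: "finite U" using Yf by (simp add: U_def)
  have hU: "\<And>w. w \<in> U \<Longrightarrow> h w = c" using hv by (auto simp: U_def)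
  have "(\<Sum>w\<in>Y. h w) = (\<Sum>w\<in>U. h w)" unfolding U_def by (rule sum.mono_neutral_right) (use Yf in auto)
  then have cU: "c * real (card U) = 1" using hs hU by (simp add: mult.commute)
  then have c0: "0 < c" 
    by (smt (verit) mult_nonpos_nonneg of_nat_0_le_iff)
  have "(\<Sum>w\<in>Y. h w * (- log 2 (G w))) = (\<Sum>w\<in>U. c * (- log 2 (G w)))"
  proof -
    have "(\<Sum>w\<in>Y. h w * (- log 2 (G w))) = (\<Sum>w\<in>U. h w * (- log 2 (G w)))"
      unfolding U_def by (rule sum.mono_neutral_right) (use Yf in auto)
    then show ?thesis using hU by simp
  qed
  also have "\<dots> \<ge> (\<Sum>w\<in>U. c * (- log 2 c) - (G w - c) / ln 2)"
  proof (rule sum_mono)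
    fix w assume w: "w \<in> U"
    then have Gp: "0 < G w" using pos by (auto simp: U_def)
    have "ln (G w / c) \<le> G w / c - 1" using Gp c0 by (intro ln_le_minus_one) simp
    then have "log 2 (G w / c) \<le> (G w / c - 1) / ln 2" by (simp add: log_def divide_right_mono)
    moreover have "log 2 (G w / c) = log 2 (G w) - log 2 c" using Gp c0 by (simp add: log_divide)
    ultimately have "c * log 2 (G w) - c * log 2 c \<le> c * ((G w / c - 1) / ln 2)"
      using c0 by (metis mult_left_mono less_imp_le right_diff_distrib)
    also have "c * ((G w / c - 1) / ln 2) = (G w - c) / ln 2" using c0 by (simp add: field_simps)
    finally show "c * (- log 2 c) - (G w - c) / ln 2 \<le> c * (- log 2 (G w))" by simp
  qed
  also have "(\<Sum>w\<in>U. c * (- log 2 c) - (G w - c) / ln 2) = - log 2 c * (c * card U) - ((\<Sum>w\<in>U. G w) - c * card U) / ln 2"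
    by (simp add: sum_subtractf sum_divide_distrib[symmetric] sum_diff_distrib algebra_simps)
  also have "\<dots> = - log 2 c - ((\<Sum>w\<in>U. G w) - 1) / ln 2" using cU by simp
  also have "\<dots> \<ge> - log 2 c"
  proof -
    have "(\<Sum>w\<in>U. G w) \<le> (\<Sum>w\<in>Y. G w)" unfolding U_def by (rule sum_mono2) (use Yf G0 in auto)
    then have "(\<Sum>w\<in>U. G w) - 1 \<le> 0" using Gs by simp
    then have "((\<Sum>w\<in>U. G w) - 1) / ln 2 \<le> 0" by (simp add: divide_nonpos_pos)
    then show ?thesis by simp
  qed
  finally show ?thesis by simp
qed


definition pS :: "real \<Rightarrow> nat \<Rightarrow> nat set \<Rightarrow> real" where
  "pS q n S = (2*q) ^ card S * (1 - 2*q) ^ card ({..<n} - S)"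
definition hS :: "bool list \<Rightarrow> nat set \<Rightarrow> bool list set \<Rightarrow> real" where
  "hS z S w = real (card {x\<in>w. supp (vadd x z) \<subseteq> S}) / 2 ^ card S"
definition Gz :: "real \<Rightarrow> nat \<Rightarrow> bool list \<Rightarrow> bool list set \<Rightarrow> real" where
  "Gz q n z w = (\<Sum>x\<in>w. bsc q n x z)"

lemma card_shift:
  assumes "z \<in> vecs n"
  shows "card {x\<in>vecs n. supp (vadd x z) \<subseteq> S} = card (Vs n S)"
proof (rule bij_betw_same_card[of "\<lambda>x. vadd x z"], rule bij_betw_byWitness[where f'="\<lambda>x. vadd x z"])
  show "\<forall>a\<in>{x \<in> vecs n. supp (vadd x z) \<subseteq> S}. vadd (vadd a z) z = a"
    using assms by (auto simp: vecs_def vadd_cancel)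
  show "\<forall>a\<in>Vs n S. vadd (vadd a z) z = a"
    using assms by (auto simp: vecs_def Vs_def vadd_cancel)
  show "(\<lambda>x. vadd x z) ` {x \<in> vecs n. supp (vadd x z) \<subseteq> S} \<subseteq> Vs n S"
    using assms by (auto simp: Vs_def intro: vecs_vadd)
  show "(\<lambda>x. vadd x z) ` Vs n S \<subseteq> {x \<in> vecs n. supp (vadd x z) \<subseteq> S}"
    using assms by (auto simp: Vs_def vecs_def vadd_cancel intro: vecs_vadd)
qed

lemma pS_nonneg: "0 \<le> q \<Longrightarrow> q \<le> 1/2 \<Longrightarrow> 0 \<le> pS q n S"
  by (simp add: pS_def)

lemma pS_sum: "(\<Sum>S\<in>Pow {..<n}. pS q n S) = 1"
  unfolding pS_def using binom_pow[of "{..<n}" "2*q" "1-2*q"] by simp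

context
  fixes n :: nat and C :: "bool list set" and k :: nat and q :: real
  assumes CL: "linear_code n C" and cC: "card C = 2 ^ k" and q0: "0 \<le> q" and q1: "q \<le> 1/2"
begin

abbreviation "D \<equiv> dual_code n C"

lemma DL: "linear_code n D" using dual_linear linear_codeD(1)[OF CL] by blast

lemma G_decomp:
  assumes w: "w \<in> W n D" and z: "z \<in> vecs n"
  shows "Gz q n z w = (\<Sum>S\<in>Pow {..<n}. pS q n S * hS z S w)"
proof -
  have ws: "w \<subseteq> vecs n" using W_sub[OF DL w] .
  have fw: "finite w" using W_finite_mem[OF DL w] .
  have "Gz q n z w = (\<Sum>x\<in>w. \<Sum>S\<in>Pow {..<n}. pS q n S * (if supp (vadd x z) \<subseteq> S then 1 / 2 ^ card S else 0))"
    unfolding Gz_def pS_def using ws z by (intro sum.cong refl bsc_decomp) auto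
  also have "\<dots> = (\<Sum>S\<in>Pow {..<n}. \<Sum>x\<in>w. pS q n S * (if supp (vadd x z) \<subseteq> S then 1 / 2 ^ card S else 0))"
    by (rule sum.swap)
  also have "\<dots> = (\<Sum>S\<in>Pow {..<n}. pS q n S * hS z S w)"
  proof (rule sum.cong)
    fix S
    have "(\<Sum>x\<in>w. (if supp (vadd x z) \<subseteq> S then 1 / 2 ^ card S else 0)) = hS z S w"
      unfolding hS_def using sum_if_const[OF fw, of "\<lambda>x. supp (vadd x z) \<subseteq> S" "1 / 2 ^ card S"] by simp
    then show "(\<Sum>x\<in>w. pS q n S * (if supp (vadd x z) \<subseteq> S then 1 / 2 ^ card S else 0)) = pS q n S * hS z S w"
      by (simp add: sum_distrib_left[symmetric])
  qed simp
  finally show ?thesis .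
qed

lemma hS_sum:
  assumes S: "S \<subseteq> {..<n}" and z: "z \<in> vecs n"
  shows "(\<Sum>w\<in>W n D. hS z S w) = 1"
proof -
  have "(\<Sum>w\<in>W n D. hS z S w) = (\<Sum>w\<in>W n D. \<Sum>x\<in>w. if supp (vadd x z) \<subseteq> S then 1 / 2 ^ card S else 0)"
  proof (rule sum.cong)
    fix w assume "w \<in> W n D"
    then have "finite w" using W_finite_mem[OF DL] by blast
    then show "hS z S w = (\<Sum>x\<in>w. if supp (vadd x z) \<subseteq> S then 1 / 2 ^ card S else 0)"
      unfolding hS_def using sum_if_const[of w "\<lambda>x. supp (vadd x z) \<subseteq> S" "1 / 2 ^ card S"] by simp
  qed simp
  also have "\<dots> = (\<Sum>x\<in>vecs n. if supp (vadd x z) \<subseteq> S then 1 / 2 ^ card S else 0)"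
    by (rule sum_W[OF DL])
  also have "\<dots> = 1 / 2 ^ card S * real (card {x\<in>vecs n. supp (vadd x z) \<subseteq> S})"
    by (rule sum_if_const) simp
  also have "\<dots> = 1" using card_shift[OF z] card_Vs[OF S] by simp
  finally show ?thesis .
qed

lemma hS_val:
  assumes w: "w \<in> W n D" and z: "z \<in> vecs n"
  shows "hS z S w = 0 \<or> hS z S w = real (card (Vs n S \<inter> D)) / 2 ^ card S"
proof (cases "{x\<in>w. supp (vadd x z) \<subseteq> S} = {}")
  case True
  then show ?thesis unfolding hS_def by (simp only: card.empty) simp
next
  case False
  then obtain x0 where x0: "x0 \<in> w" "supp (vadd x0 z) \<subseteq> S" by blast
  have ws: "w \<subseteq> vecs n" using W_sub[OF DL w] .
  have x0v: "x0 \<in> vecs n" using x0 ws by blast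
  have wc: "w = cs D x0" using W_cs[OF DL w x0(1)] by simp
  have lz: "length z = n" using z by (simp add: vecs_def)
  have lx0: "length x0 = n" using x0v by (simp add: vecs_def)
  have "{x\<in>w. supp (vadd x z) \<subseteq> S} = vadd x0 ` (Vs n S \<inter> D)"
  proof
    show "{x\<in>w. supp (vadd x z) \<subseteq> S} \<subseteq> vadd x0 ` (Vs n S \<inter> D)"
    proof
      fix x assume x: "x \<in> {x\<in>w. supp (vadd x z) \<subseteq> S}"
      have xv: "x \<in> vecs n" "vadd x0 x \<in> D" using x cs_mem[OF DL x0v] wc by auto
      have lx: "length x = n" using xv by (simp add: vecs_def)
      have e: "vadd x0 x = vadd (vadd x0 z) (vadd x z)" using lx lx0 lz by (intro nth_equalityI) auto
      have "supp (vadd (vadd x0 z) (vadd x z)) \<subseteq> supp (vadd x0 z) \<union> supp (vadd x z)"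
        by (rule supp_vadd) (simp add: lx lx0 lz)
      then have "supp (vadd x0 x) \<subseteq> S" unfolding e using x x0(2) by blast
      moreover have "x = vadd x0 (vadd x0 x)" using lx lx0 vadd_cancel2 by simp
      moreover have "vadd x0 x \<in> vecs n" using xv x0v vecs_vadd by blast
      ultimately have "vadd x0 x \<in> Vs n S \<inter> D" using xv by (simp add: Vs_def)
      then show "x \<in> vadd x0 ` (Vs n S \<inter> D)" using \<open>x = vadd x0 (vadd x0 x)\<close> by blast
    qed
    show "vadd x0 ` (Vs n S \<inter> D) \<subseteq> {x\<in>w. supp (vadd x z) \<subseteq> S}"
    proof
      fix y assume "y \<in> vadd x0 ` (Vs n S \<inter> D)"
      then obtain d where d: "d \<in> Vs n S" "d \<in> D" "y = vadd x0 d" by blast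
      have ld: "length d = n" using d by (simp add: Vs_def vecs_def)
      have yv: "y \<in> vecs n" using d x0v by (auto simp: Vs_def intro: vecs_vadd)
      have "vadd x0 y = d" using d ld lx0 vadd_cancel2 by simp
      then have yw: "y \<in> w" using cs_mem[OF DL x0v] wc yv d(2) by simp
      have e: "vadd y z = vadd (vadd x0 z) d" unfolding d(3) using ld lx0 lz by (intro nth_equalityI) auto
      have sd: "supp d \<subseteq> S" using d(1) by (simp add: Vs_def)
      have "supp (vadd (vadd x0 z) d) \<subseteq> supp (vadd x0 z) \<union> supp d" 
        by (rule supp_vadd) (simp add: ld lx0 lz)
      then have "supp (vadd y z) \<subseteq> S" unfolding e using sd x0(2) by blast
      with yw show "y \<in> {x\<in>w. supp (vadd x z) \<subseteq> S}" by simp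
    qed
  qed
  moreover have "inj_on (vadd x0) (Vs n S \<inter> D)"
  proof (rule inj_onI)
    fix a b assume a: "a \<in> Vs n S \<inter> D" and b: "b \<in> Vs n S \<inter> D" and e: "vadd x0 a = vadd x0 b"
    have "length a = n" "length b = n" using a b by (auto simp: Vs_def vecs_def)
    then show "a = b" using vadd_cancel2[of a x0] vadd_cancel2[of b x0] lx0 e by metis
  qed
  ultimately have "card {x\<in>w. supp (vadd x z) \<subseteq> S} = card (Vs n S \<inter> D)" 
    by (simp add: card_image)
  then show ?thesis unfolding hS_def by simp
qed

lemma G_sum:
  assumes z: "z \<in> vecs n"
  shows "(\<Sum>w\<in>W n D. Gz q n z w) = 1"
proof -
  have "(\<Sum>w\<in>W n D. Gz q n z w) = (\<Sum>w\<in>W n D. \<Sum>S\<in>Pow {..<n}. pS q n S * hS z S w)"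
    using G_decomp z by (intro sum.cong) simp_all
  also have "\<dots> = (\<Sum>S\<in>Pow {..<n}. \<Sum>w\<in>W n D. pS q n S * hS z S w)"
    by (rule sum.swap)
  also have "\<dots> = (\<Sum>S\<in>Pow {..<n}. pS q n S * (\<Sum>w\<in>W n D. hS z S w))"
    by (simp only: sum_distrib_left)
  also have "\<dots> = (\<Sum>S\<in>Pow {..<n}. pS q n S)" using hS_sum z by (intro sum.cong) simp_all
  finally show ?thesis using pS_sum by simp
qed

lemma G_nonneg: "0 \<le> Gz q n z w"
  unfolding Gz_def bsc_def using q0 q1 by (intro sum_nonneg) auto


definition LL :: "nat set \<Rightarrow> real" where "LL T = log 2 (real (card (C \<inter> Vs n T)))"

lemma K_pos: "1 \<le> card (C \<inter> Vs n T)"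
proof -
  have "replicate n False \<in> C \<inter> Vs n T"
    using linear_codeD(2)[OF CL] by (auto simp: Vs_def vecs_def supp_def)
  moreover have "finite (C \<inter> Vs n T)" by simp
  ultimately show ?thesis by (metis One_nat_def Suc_leI card_gt_0_iff empty_iff)
qed

lemma cS_log:
  assumes S: "S \<subseteq> {..<n}"
  shows "- log 2 (real (card (Vs n S \<inter> D)) / 2 ^ card S) = real k - LL ({..<n} - S)"
proof -
  have du: "real (card (Vs n S \<inter> D)) * 2 ^ k = 2 ^ card S * real (card (C \<inter> Vs n ({..<n} - S)))"
    using duality[OF CL S] cC by simp
  have "real (card (Vs n S \<inter> D)) / 2 ^ card S = real (card (C \<inter> Vs n ({..<n} - S))) / 2 ^ k"
    using du by (simp add: field_simps)
  moreover have "0 < real (card (C \<inter> Vs n ({..<n} - S)))" using K_pos[of "{..<n} - S"] by simp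
  ultimately show ?thesis unfolding LL_def by (auto simp: log_divide log_nat_power)
qed

lemma Hz_bound:
  assumes z: "z \<in> vecs n"
  shows "real k - (\<Sum>S\<in>Pow {..<n}. pS q n S * LL ({..<n} - S))
         \<le> (\<Sum>w\<in>W n D. - (Gz q n z w * log 2 (Gz q n z w)))"
proof -
  let ?G = "Gz q n z"
  have "(\<Sum>w\<in>W n D. - (?G w * log 2 (?G w))) = (\<Sum>w\<in>W n D. \<Sum>S\<in>Pow {..<n}. pS q n S * (hS z S w * (- log 2 (?G w))))"
  proof (rule sum.cong)
    fix w assume w: "w \<in> W n D"
    define lg where "lg = - log 2 (?G w)"
    have "- (?G w * log 2 (?G w)) = ?G w * lg" by (simp add: lg_def)
    also have "\<dots> = (\<Sum>S\<in>Pow {..<n}. pS q n S * hS z S w) * lg" using G_decomp[OF w z] by simp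
    also have "\<dots> = (\<Sum>S\<in>Pow {..<n}. pS q n S * (hS z S w * lg))"
      by (simp add: sum_distrib_right mult.assoc)
    finally show "- (?G w * log 2 (?G w)) = (\<Sum>S\<in>Pow {..<n}. pS q n S * (hS z S w * (- log 2 (?G w))))"
      by (simp add: lg_def)
  qed simp
  also have "\<dots> = (\<Sum>S\<in>Pow {..<n}. \<Sum>w\<in>W n D. pS q n S * (hS z S w * (- log 2 (?G w))))"
    by (rule sum.swap)
  also have "\<dots> = (\<Sum>S\<in>Pow {..<n}. pS q n S * (\<Sum>w\<in>W n D. hS z S w * (- log 2 (?G w))))"
    by (simp only: sum_distrib_left)
  also have "\<dots> \<ge> (\<Sum>S\<in>Pow {..<n}. pS q n S * (real k - LL ({..<n} - S)))"
  proof (rule sum_mono)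
    fix S assume S: "S \<in> Pow {..<n}"
    show "pS q n S * (real k - LL ({..<n} - S)) \<le> pS q n S * (\<Sum>w\<in>W n D. hS z S w * (- log 2 (?G w)))"
    proof (cases "pS q n S = 0")
      case True then show ?thesis by simp
    next
      case False
      then have pp: "0 < pS q n S" using pS_nonneg[OF q0 q1, of n S] by simp
      have "- log 2 (real (card (Vs n S \<inter> D)) / 2 ^ card S) \<le> (\<Sum>w\<in>W n D. hS z S w * (- log 2 (?G w)))"
      proof (rule Gibbs)
        show "finite (W n D)" by (rule finite_W[OF DL])
        show "\<And>w. w \<in> W n D \<Longrightarrow> hS z S w = 0 \<or> hS z S w = real (card (Vs n S \<inter> D)) / 2 ^ card S"
          using hS_val z by blast
        show "(\<Sum>w\<in>W n D. hS z S w) = 1" using hS_sum S z by blast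
        show "(\<Sum>w\<in>W n D. ?G w) \<le> 1" using G_sum z by simp
        show "\<And>w. w \<in> W n D \<Longrightarrow> 0 \<le> ?G w" using G_nonneg by blast
        show "0 < ?G w" if w: "w \<in> W n D" and h: "hS z S w \<noteq> 0" for w
        proof -
          have h0: "0 \<le> hS z S' w" for S' by (simp add: hS_def)
          have "pS q n S * hS z S w \<le> (\<Sum>S\<in>Pow {..<n}. pS q n S * hS z S w)"
            by (rule member_le_sum) (use S h0 pS_nonneg[OF q0 q1] in auto)
          moreover have "0 < pS q n S * hS z S w" using pp h h0[of S] by simp
          ultimately show ?thesis using G_decomp[OF w z] by simp
        qed
      qed
      then show ?thesis using cS_log S pp by (intro mult_left_mono) auto
    qed
  qed
  also have "(\<Sum>S\<in>Pow {..<n}. pS q n S * (real k - LL ({..<n} - S))) =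
      real k * (\<Sum>S\<in>Pow {..<n}. pS q n S) - (\<Sum>S\<in>Pow {..<n}. pS q n S * LL ({..<n} - S))"
    by (simp add: algebra_simps sum_subtractf sum_distrib_left)
  finally show ?thesis using pS_sum by simp
qed


lemma pWZ_eq:
  assumes w: "w \<in> W n D"
  shows "p_WZ q n (vecs n) D w z = Gz q n z w / 2 ^ n"
proof -
  have "real (card (cosets (vecs n) D)) * real (card w) = 2 ^ n"
    using card_W[OF DL] W_card[OF DL w] W_eq[OF DL] by simp
  then have "1 / real (card (cosets (vecs n) D)) * (1 / real (card w)) = 1 / 2 ^ n"
    by (simp add: field_simps)
  then show ?thesis unfolding p_WZ_def Gz_def
    by (simp add: sum_distrib_left[symmetric] sum_divide_distrib[symmetric])
qed

lemma pZ_eq: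
  assumes z: "z \<in> vecs n"
  shows "p_Z q n (vecs n) D z = 1 / 2 ^ n"
proof -
  have "p_Z q n (vecs n) D z = (\<Sum>w\<in>W n D. Gz q n z w / 2 ^ n)"
    unfolding p_Z_def W_eq[OF DL, symmetric] using pWZ_eq by (intro sum.cong) auto
  also have "\<dots> = 1 / 2 ^ n" using G_sum[OF z] by (simp add: sum_divide_distrib[symmetric])
  finally show ?thesis .
qed

lemma equiv_bound:
  "real k - (\<Sum>S\<in>Pow {..<n}. pS q n S * LL ({..<n} - S)) \<le> equivocation q n (vecs n) D"
proof -
  let ?Phi = "(\<Sum>S\<in>Pow {..<n}. pS q n S * LL ({..<n} - S))"
  have "equivocation q n (vecs n) D =
      - (\<Sum>w\<in>W n D. \<Sum>z\<in>vecs n. Gz q n z w / 2 ^ n * log 2 (Gz q n z w))"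
    unfolding equivocation_def W_eq[OF DL, symmetric]
  proof (intro arg_cong[where f=uminus] sum.cong refl)
    fix w z assume w: "w \<in> W n D" and z: "z \<in> vecs n"
    show "p_WZ q n (vecs n) D w z * log 2 (p_WZ q n (vecs n) D w z / p_Z q n (vecs n) D z) =
          Gz q n z w / 2 ^ n * log 2 (Gz q n z w)"
      using pWZ_eq[OF w] pZ_eq[OF z] by simp
  qed
  also have "\<dots> = (\<Sum>z\<in>vecs n. 1 / 2 ^ n * (\<Sum>w\<in>W n D. - (Gz q n z w * log 2 (Gz q n z w))))"
    by (subst sum.swap) (simp add: sum_distrib_left sum_negf)
  also have "\<dots> \<ge> (\<Sum>z\<in>vecs n. 1 / 2 ^ n * (real k - ?Phi))"
    by (rule sum_mono, rule mult_left_mono) (use Hz_bound in auto)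
  also have "(\<Sum>z\<in>vecs n. 1 / 2 ^ n * (real k - ?Phi)) = real k - ?Phi"
    using card_vecs[of n] by simp
  finally show ?thesis .
qed


lemma dd: "T \<subseteq> A \<Longrightarrow> A - (A - T) = T" by blast

lemma Phi_Ex: "(\<Sum>S\<in>Pow {..<n}. pS q n S * LL ({..<n} - S)) = Ex (1 - 2*q) {..<n} LL"
  unfolding Ex_def pS_def
  by (rule sum.reindex_bij_witness[of _ "\<lambda>T. {..<n} - T" "\<lambda>T. {..<n} - T"]) (auto simp: dd)

lemma K_insert: "card (C \<inter> Vs n (insert a T)) \<le> 2 * card (C \<inter> Vs n T)"
proof -
  let ?K = "C \<inter> Vs n T" and ?K' = "C \<inter> Vs n (insert a T)"
  note L = linear_codeD[OF CL]
  have fK: "finite ?K" by simp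
  show ?thesis
  proof (cases "?K' \<subseteq> ?K")
    case True
    then have "card ?K' \<le> card ?K" using fK card_mono by blast
    then show ?thesis by simp
  next
    case False
    then obtain c0 where c0: "c0 \<in> ?K'" "c0 \<notin> ?K" by blast
    have lc0: "length c0 = n" using c0 by (simp add: Vs_def vecs_def)
    have ac0: "a \<in> supp c0" using c0 by (auto simp: Vs_def)
    have "?K' \<subseteq> ?K \<union> vadd c0 ` ?K"
    proof
      fix c assume c: "c \<in> ?K'"
      show "c \<in> ?K \<union> vadd c0 ` ?K"
      proof (cases "c \<in> ?K")
        case True then show ?thesis by blast
      next
        case False
        have lc: "length c = n" using c by (simp add: Vs_def vecs_def)
        have ac: "a \<in> supp c" using c False by (auto simp: Vs_def)
        let ?d = "vadd c0 c"
        have dC: "?d \<in> C" using c c0 L(3) by blast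
        have "supp ?d \<subseteq> T"
        proof
          fix i assume i: "i \<in> supp ?d"
          then have il: "i < n" and ne: "c0 ! i \<noteq> c ! i" using lc lc0 by (auto simp: supp_def)
          then have "i \<in> supp c0 \<or> i \<in> supp c" using lc lc0 by (auto simp: supp_def)
          moreover have "i \<noteq> a" using ne ac ac0 by (auto simp: supp_def)
          ultimately show "i \<in> T" using c c0 by (auto simp: Vs_def)
        qed
        then have "?d \<in> ?K" using dC lc lc0 by (auto simp: Vs_def vecs_def)
        moreover have "c = vadd c0 ?d" using lc lc0 vadd_cancel2 by simp
        ultimately show ?thesis by blast
      qed
    qed
    then have "card ?K' \<le> card (?K \<union> vadd c0 ` ?K)" by (intro card_mono) auto
    also have "\<dots> \<le> card ?K + card (vadd c0 ` ?K)" by (rule card_Un_le)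
    also have "card (vadd c0 ` ?K) \<le> card ?K" by (rule card_image_le) simp
    finally show ?thesis by simp
  qed
qed

lemma LL_mono: "LL T \<le> LL (insert a T)"
proof -
  have "card (C \<inter> Vs n T) \<le> card (C \<inter> Vs n (insert a T))"
    by (intro card_mono) (auto simp: Vs_def)
  then show ?thesis unfolding LL_def using K_pos[of T] by simp
qed

lemma LL_ins: "LL (insert a T) \<le> LL T + 1"
proof -
  have p: "0 < real (card (C \<inter> Vs n T))" using K_pos[of T] by simp
  have "LL (insert a T) \<le> log 2 (2 * real (card (C \<inter> Vs n T)))"
    unfolding LL_def using K_insert[of a T] K_pos[of "insert a T"] by simp
  also have "\<dots> = 1 + LL T" unfolding LL_def using p by (auto simp: log_mult)
  finally show ?thesis by simp
qed

lemma LL_le: "LL T \<le> 2 * real k * (1 - 1 / real (card (C \<inter> Vs n T)))"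
proof -
  have cK: "card (C \<inter> Vs n T) \<le> 2 ^ k" using cC card_mono[of C "C \<inter> Vs n T"] linear_codeD(4)[OF CL] by auto
  show ?thesis
  proof (cases "card (C \<inter> Vs n T) = 1")
    case True then show ?thesis by (simp add: LL_def)
  next
    case False
    then have "2 \<le> card (C \<inter> Vs n T)" using K_pos[of T] by simp
    then have h: "1/2 \<le> 1 - 1 / real (card (C \<inter> Vs n T))" by (simp add: field_simps)
    have "LL T \<le> log 2 (2 ^ k)" unfolding LL_def using cK K_pos[of T] 
      by (subst log_le_cancel_iff) auto
    also have "\<dots> = real k" by (simp add: log_nat_power)
    also have "\<dots> \<le> 2 * real k * (1 - 1 / real (card (C \<inter> Vs n T)))"
    proof -
      have "real k * (1/2) \<le> real k * (1 - 1 / real (card (C \<inter> Vs n T)))"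
        using h by (intro mult_left_mono) auto
      then show ?thesis by linarith
    qed
    finally show ?thesis .
  qed
qed

lemma bec_Ex: "bec_ml_error n C d = Ex d {..<n} (\<lambda>T. 1 - 1 / real (card (C \<inter> Vs n T)))"
proof -
  note L = linear_codeD[OF CL]
  have cnt: "card {c'\<in>C. \<forall>i<n. i \<notin> S \<longrightarrow> c' ! i = c ! i} = card (C \<inter> Vs n S)"
    if c: "c \<in> C" for c S
  proof -
    have lc: "length c = n" using L c by blast
    have "{c'\<in>C. \<forall>i<n. i \<notin> S \<longrightarrow> c' ! i = c ! i} = vadd c ` (C \<inter> Vs n S)"
    proof
      show "{c'\<in>C. \<forall>i<n. i \<notin> S \<longrightarrow> c' ! i = c ! i} \<subseteq> vadd c ` (C \<inter> Vs n S)"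
      proof
        fix c' assume c': "c' \<in> {c'\<in>C. \<forall>i<n. i \<notin> S \<longrightarrow> c' ! i = c ! i}"
        have lc': "length c' = n" using L c' by blast
        have "vadd c c' \<in> C" using L c c' by blast
        moreover have "supp (vadd c c') \<subseteq> S" using c' lc lc' by (auto simp: supp_def)
        moreover have "vadd c c' \<in> vecs n" using lc lc' by (simp add: vecs_def)
        moreover have "c' = vadd c (vadd c c')" using lc lc' vadd_cancel2 by simp
        ultimately show "c' \<in> vadd c ` (C \<inter> Vs n S)" by (auto simp: Vs_def)
      qed
      show "vadd c ` (C \<inter> Vs n S) \<subseteq> {c'\<in>C. \<forall>i<n. i \<notin> S \<longrightarrow> c' ! i = c ! i}"
      proof
        fix y assume "y \<in> vadd c ` (C \<inter> Vs n S)"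
        then obtain d where d: "d \<in> C" "d \<in> Vs n S" "y = vadd c d" by blast
        have ld: "length d = n" using d by (simp add: Vs_def vecs_def)
        have "y \<in> C" using d c L by blast
        moreover have "y ! i = c ! i" if "i < n" "i \<notin> S" for i
        proof -
          have "\<not> d ! i" using d(2) that ld by (auto simp: Vs_def supp_def)
          then show ?thesis using d(3) that lc ld by simp
        qed
        ultimately show "y \<in> {c'\<in>C. \<forall>i<n. i \<notin> S \<longrightarrow> c' ! i = c ! i}" by blast
      qed
    qed
    moreover have "inj_on (vadd c) (C \<inter> Vs n S)"
    proof (rule inj_onI)
      fix a b assume a: "a \<in> C \<inter> Vs n S" and b: "b \<in> C \<inter> Vs n S" and e: "vadd c a = vadd c b"
      have "length a = n" "length b = n" using a b L by auto
      then show "a = b" using vadd_cancel2[of a c] vadd_cancel2[of b c] lc e by metis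
    qed
    ultimately show ?thesis by (simp add: card_image)
  qed
  have "bec_ml_error n C d = (\<Sum>c\<in>C. 1 / real (card C) * Ex d {..<n} (\<lambda>T. 1 - 1 / real (card (C \<inter> Vs n T))))"
    unfolding bec_ml_error_def Ex_def sum_distrib_left
  proof (intro sum.cong refl)
    fix c S assume c: "c \<in> C" and S: "S \<in> Pow {..<n}"
    have "n - card S = card ({..<n} - S)" using S by (simp add: card_Diff_subset finite_subset)
    then show "1 / real (card C) * (d ^ card S * (1 - d) ^ (n - card S)) *
          (1 - 1 / real (card {c' \<in> C. \<forall>i<n. i \<notin> S \<longrightarrow> c' ! i = c ! i})) =
          1 / real (card C) * (d ^ card S * (1 - d) ^ card ({..<n} - S) * (1 - 1 / real (card (C \<inter> Vs n S))))"
      using cnt[OF c, of S] by simp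
  qed
  also have "\<dots> = Ex d {..<n} (\<lambda>T. 1 - 1 / real (card (C \<inter> Vs n T)))"
    using cC by simp
  finally show ?thesis .
qed

lemma Ex_LL_bec:
  assumes "0 \<le> d" "d \<le> 1"
  shows "Ex d {..<n} LL \<le> 2 * real k * bec_ml_error n C d"
proof -
  have "Ex d {..<n} LL \<le> Ex d {..<n} (\<lambda>T. 2 * real k * (1 - 1 / real (card (C \<inter> Vs n T))))"
    by (rule Ex_mono) (use assms LL_le in auto)
  also have "\<dots> = 2 * real k * bec_ml_error n C d"
    unfolding bec_Ex Ex_def by (simp add: sum_distrib_left algebra_simps)
  finally show ?thesis .
qed

lemma main_bound:
  assumes "0 \<le> d" "d \<le> 1"
  shows "real k - 2 * real k * bec_ml_error n C d - real n * max 0 (1 - 2*q - d)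
        \<le> equivocation q n (vecs n) D"
proof -
  have "Ex (1 - 2*q) {..<n} LL \<le> Ex d {..<n} LL + real (card {..<n}) * max 0 (1 - 2*q - d)"
    by (rule Ex_lip) (use assms q0 q1 LL_mono LL_ins in auto)
  then have "Ex (1 - 2*q) {..<n} LL \<le> 2 * real k * bec_ml_error n C d + real n * max 0 (1 - 2*q - d)"
    using Ex_LL_bec[OF assms] by simp
  then show ?thesis using equiv_bound Phi_Ex by simp
qed

end


lemma dual_card:
  assumes CL: "linear_code n C" and cC: "card C = 2 ^ k"
  shows "real (card (dual_code n C)) * 2 ^ k = 2 ^ n"
proof -
  have d: "real (card (Vs n {..<n} \<inter> dual_code n C)) * real (card C) =
         2 ^ card {..<n} * real (card (C \<inter> Vs n ({..<n} - {..<n})))"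
    by (rule duality[OF CL]) simp
  have "Vs n {..<n} \<inter> dual_code n C = dual_code n C"
    using supp_sub_n by (auto simp: Vs_def dual_code_def)
  moreover have "C \<inter> Vs n ({..<n} - {..<n}) = {replicate n False}"
  proof
    show "C \<inter> Vs n ({..<n} - {..<n}) \<subseteq> {replicate n False}"
    proof
      fix x assume x: "x \<in> C \<inter> Vs n ({..<n} - {..<n})"
      then have "length x = n" "supp x = {}" by (auto simp: Vs_def vecs_def)
      then have "x = replicate n False" by (intro nth_equalityI) (auto simp: supp_def)
      then show "x \<in> {replicate n False}" by simp
    qed
    show "{replicate n False} \<subseteq> C \<inter> Vs n ({..<n} - {..<n})"
      using linear_codeD(2)[OF CL] by (auto simp: Vs_def vecs_def supp_def)
  qed
  ultimately show ?thesis using d cC by simp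
qed

theorem theorem3:
  fixes q Rc :: real and len :: "nat \<Rightarrow> nat" and C :: "nat \<Rightarrow> bool list set"
  assumes "0 \<le> q" and "q \<le> 1/2"
    and "good_code_seq len C Rc"
    and "q \<ge> (1 - erasure_threshold len C) / 2"
  shows "nested_achieves q len (\<lambda>m. vecs (len m)) (\<lambda>m. dual_code (len m) (C m)) Rc Rc"
proof -
  note q0 = assms(1) and q1 = assms(2)
  have cs: "code_seq len C Rc" and Rc0: "0 < Rc"
    and ex: "\<exists>\<delta>. 0 < \<delta> \<and> \<delta> \<le> 1 \<and> (\<lambda>m. bec_ml_error (len m) (C m) \<delta>) \<longlonglongrightarrow> 0"
    using assms(3) by (auto simp: good_code_seq_def)
  have lpos: "\<And>m. 0 < len m" and CL: "\<And>m. linear_code (len m) (C m)"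
    and kex: "\<And>m. \<exists>k::nat. card (C m) = 2 ^ k \<and> real k = Rc * real (len m)"
    using cs by (auto simp: code_seq_def)
  define kk where "kk m = (SOME k::nat. card (C m) = 2 ^ k \<and> real k = Rc * real (len m))" for m
  have kk: "card (C m) = 2 ^ kk m" "real (kk m) = Rc * real (len m)" for m
    using someI_ex[OF kex[of m]] by (auto simp: kk_def)
  have rate: "info_rate (len m) (vecs (len m)) (dual_code (len m) (C m)) = Rc" for m
  proof -
    let ?n = "len m"
    have dc: "real (card (dual_code ?n (C m))) * 2 ^ kk m = 2 ^ ?n" using dual_card[OF CL kk(1)] .
    have kn: "kk m \<le> ?n"
    proof -
      have "C m \<subseteq> vecs ?n" using linear_codeD(1)[OF CL] .
      then have "card (C m) \<le> card (vecs ?n)" by (rule card_mono[OF finite_vecs])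
      then have "(2::nat) ^ kk m \<le> 2 ^ ?n" using kk(1)[of m] card_vecs[of ?n] by simp
      then show ?thesis by (rule power_le_imp_le_exp[rotated]) simp
    qed
    have "real (card (dual_code ?n (C m))) = 2 ^ (?n - kk m)"
      using dc kn by (simp add: power_diff field_simps)
    then have "log 2 (real (card (dual_code ?n (C m)))) = real ?n - real (kk m)"
      using kn by (simp add: log_nat_power)
    moreover have "log 2 (real (card (vecs ?n))) = real ?n" by (simp add: card_vecs log_nat_power)
    ultimately show ?thesis unfolding info_rate_def using kk(2)[of m] lpos[of m]
      by (simp add: diff_divide_distrib)
  qed
  have legit: "(\<lambda>m. legit_error (len m) (vecs (len m)) (dual_code (len m) (C m))) \<longlonglongrightarrow> 0"
  proof -
    have "\<And>m. linear_code (len m) (dual_code (len m) (C m))"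
      using dual_linear linear_codeD(1)[OF CL] by blast
    then show ?thesis using legit0 by simp
  qed
  define Sset where "Sset = {\<delta> \<in> {0..1}. (\<lambda>m. bec_ml_error (len m) (C m) \<delta>) \<longlonglongrightarrow> 0}"
  have thr: "erasure_threshold len C = Sup Sset" by (simp add: erasure_threshold_def Sset_def)
  have Sne: "Sset \<noteq> {}" using ex by (auto simp: Sset_def)
  have Sbdd: "bdd_above Sset" by (rule bdd_aboveI[of _ 1]) (auto simp: Sset_def)
  have eqv: "ereal Rc \<le> liminf (\<lambda>m. ereal (equivocation q (len m) (vecs (len m)) (dual_code (len m) (C m)) / real (len m)))"
  proof (subst le_Liminf_iff, intro allI impI)
    fix y :: ereal assume y: "y < ereal Rc"
    obtain z where z: "y < z" "z < ereal Rc" using dense[OF y] by blast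
    then obtain r where r: "z = ereal r" by (cases z) auto
    have yr: "y < ereal r" and rR: "r < Rc" using z r by auto
    define eta where "eta = Rc - r"
    have eta: "0 < eta" using rR by (simp add: eta_def)
    have "Sup Sset - eta/2 < Sup Sset" using eta by simp
    then obtain d where d: "d \<in> Sset" "Sup Sset - eta/2 < d" using less_cSup_iff[OF Sne Sbdd] by blast
    have d01: "0 \<le> d" "d \<le> 1" and dlim: "(\<lambda>m. bec_ml_error (len m) (C m) d) \<longlonglongrightarrow> 0"
      using d(1) by (auto simp: Sset_def)
    have tle: "1 - 2*q \<le> Sup Sset" using assms(4) thr by simp
    have mx: "max 0 (1 - 2*q - d) < eta/2" using tle d(2) eta by (simp add: max_def)
    have ev: "eventually (\<lambda>m. bec_ml_error (len m) (C m) d < eta / (4 * Rc)) sequentially"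
      using order_tendstoD(2)[OF dlim] eta Rc0 by simp
    show "eventually (\<lambda>m. y < ereal (equivocation q (len m) (vecs (len m)) (dual_code (len m) (C m)) / real (len m))) sequentially"
    proof (rule eventually_mono[OF ev])
      fix m assume b: "bec_ml_error (len m) (C m) d < eta / (4 * Rc)"
      let ?n = "len m" and ?E = "equivocation q (len m) (vecs (len m)) (dual_code (len m) (C m))"
      have mb: "real (kk m) - 2 * real (kk m) * bec_ml_error ?n (C m) d - real ?n * max 0 (1 - 2*q - d) \<le> ?E"
        by (rule main_bound[OF CL kk(1) q0 q1 d01])
      have np: "0 < real ?n" using lpos[of m] by simp
      have "?E / real ?n \<ge> Rc - 2 * Rc * bec_ml_error ?n (C m) d - max 0 (1 - 2*q - d)"
      proof -
        have "(Rc - 2 * Rc * bec_ml_error ?n (C m) d - max 0 (1 - 2*q - d)) * real ?n \<le> ?E"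
          using mb kk(2)[of m] by (simp add: algebra_simps)
        then show ?thesis using np by (simp add: field_simps)
      qed
      moreover have "2 * Rc * bec_ml_error ?n (C m) d < eta / 2"
      proof -
        have "2 * Rc * bec_ml_error ?n (C m) d < 2 * Rc * (eta / (4 * Rc))"
          using b Rc0 by (intro mult_strict_left_mono) auto
        also have "\<dots> = eta / 2" using Rc0 by simp
        finally show ?thesis .
      qed
      ultimately have "r < ?E / real ?n" using mx by (simp add: eta_def)
      then have "ereal r < ereal (?E / real ?n)" by simp
      with yr show "y < ereal (?E / real ?n)" by (rule less_trans)
    qed
  qed
  show ?thesis unfolding nested_achieves_def using rate legit eqv by simp
qed

end
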